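(* Let $\mathcal D\subseteq(0,1)$ and $f:\mathcal D\to(0,1)$. Then $f$ has a block simulation if and only if there exist an integer $k\ge0$ and integers $d_0,\dots,d_k,e_0,\dots,e_k$ with $0\le d_i\le e_i$ for all $i$ such that, writing $D(p)=\sum_{i=0}^k d_ip^i(1-p)^{k-i}$ and $E(p)=\sum_{i=0}^k e_ip^i(1-p)^{k-i}$, one has $E(p)\ne0$ and $f(p)=D(p)/E(p)$ for all $p\in\mathcal D$.
   Context: For $w\in\{0,1\}^*$ let $n_i(w)$ be the number of $i$'s in $w$; $\mathbf P_p[w]=p^{n_1(w)}(1-p)^{n_0(w)}$, $\mathbf P_p[L]=\sum_{w\in L}\mathbf P_p[w]$. A simulation of $f:\mathcal D\to[0,1]$ is a pair of disjoint languages $L_0,L_1\subseteq\{0,1\}^*$ with $L_0\cup L_1$ prefix-free such that $\mathbf P_p[L_0\cup L_1]=1$ and $\mathbf P_p[L_1]=f(p)$ for all $p\in\mathcal D$. A block simulation of $f$ is a simulation of the following form: for some $k\ge1$ and disjoint sets $A_0,A_1\subseteq\{0,1\}^k$, with $A'=\{0,1\}^k\setminus(A_0\cup A_1)$, one has $L_i=(A')^*A_i$, the set of concatenations $u_1\cdots u_mv$ with $m\ge0$, $u_j\in A'$, $v\in A_i$. *)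

theory Defs
  imports "HOL-Analysis.Analysis" "HOL-Library.Sublist"
begin

text \<open>Binary words are lists of booleans; True encodes the letter 1, False the letter 0.\<close>

definition nones :: "bool list \<Rightarrow> nat" where
  "nones w = length (filter (\<lambda>b. b) w)"

definition nzeros :: "bool list \<Rightarrow> nat" where
  "nzeros w = length (filter (\<lambda>b. \<not> b) w)"

definition Pw :: "real \<Rightarrow> bool list \<Rightarrow> real" where
  "Pw p w = p ^ nones w * (1 - p) ^ nzeros w"

definition PL :: "real \<Rightarrow> bool list set \<Rightarrow> real" where
  "PL p L = infsum (Pw p) L"

definition prefix_free :: "bool list set \<Rightarrow> bool" where
  "prefix_free L \<longleftrightarrow> (\<forall>u\<in>L. \<forall>v\<in>L. \<not> strict_prefix u v)"

definition is_simulation ::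
    "(real \<Rightarrow> real) \<Rightarrow> real set \<Rightarrow> bool list set \<Rightarrow> bool list set \<Rightarrow> bool" where
  "is_simulation f D L0 L1 \<longleftrightarrow>
     L0 \<inter> L1 = {} \<and> prefix_free (L0 \<union> L1) \<and>
     (\<forall>p\<in>D. PL p (L0 \<union> L1) = 1 \<and> PL p L1 = f p)"

definition block_lang :: "bool list set \<Rightarrow> bool list set \<Rightarrow> bool list set" where
  "block_lang A' A = {concat us @ v | us v. set us \<subseteq> A' \<and> v \<in> A}"

definition has_block_simulation :: "(real \<Rightarrow> real) \<Rightarrow> real set \<Rightarrow> bool" where
  "has_block_simulation f D \<longleftrightarrow>
     (\<exists>k::nat. \<exists>A0 A1. k \<ge> 1 \<and>
        A0 \<subseteq> {w. length w = k} \<and> A1 \<subseteq> {w. length w = k} \<and> A0 \<inter> A1 = {} \<and>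
        (let A' = {w. length w = k} - (A0 \<union> A1) in
          is_simulation f D (block_lang A' A0) (block_lang A' A1)))"

end

theory Submission
  imports Defs
begin

abbreviation W :: "nat \<Rightarrow> bool list set" where "W n \<equiv> {w. length w = n}"

lemma nones_nzeros: "nones w + nzeros w = length w"
  unfolding nones_def nzeros_def by (rule sum_length_filter_compl)

lemma Pw_append: "Pw p (u @ v) = Pw p u * Pw p v"
  unfolding Pw_def nones_def nzeros_def by (simp add: power_add)

lemma Pw_pos: "0 < p \<Longrightarrow> p < 1 \<Longrightarrow> 0 < Pw p w"
  unfolding Pw_def by simp

lemma Pw_nonneg: "0 \<le> p \<Longrightarrow> p \<le> 1 \<Longrightarrow> 0 \<le> Pw p w"
  unfolding Pw_def by simp

lemma Pw_len: "length w = K \<Longrightarrow> Pw p w = p ^ nones w * (1 - p) ^ (K - nones w)"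
  unfolding Pw_def using nones_nzeros[of w] by (metis add_diff_cancel_left')

lemma sum_group_words:
  assumes "A \<subseteq> W K"
  shows "sum (Pw p) A = (\<Sum>i\<le>K. real (card {w\<in>A. nones w = i}) * p ^ i * (1 - p) ^ (K - i))"
proof -
  have fA: "finite A" using assms finite_list_length finite_subset by blast
  have im: "nones ` A \<subseteq> {..K}"
  proof
    fix y assume "y \<in> nones ` A"
    then obtain w where "w \<in> A" "y = nones w" by auto
    then show "y \<in> {..K}" using assms nones_nzeros[of w] by auto
  qed
  have "sum (Pw p) A = (\<Sum>i\<le>K. sum (Pw p) {w\<in>A. nones w = i})"
    using sum.group[OF fA finite_atMost im, of "Pw p"] by simp
  also have "\<dots> = (\<Sum>i\<le>K. real (card {w\<in>A. nones w = i}) * p ^ i * (1 - p) ^ (K - i))"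
  proof (rule sum.cong[OF refl])
    fix i assume "i \<in> {..K}"
    have "sum (Pw p) {w\<in>A. nones w = i} = sum (\<lambda>_. p ^ i * (1 - p) ^ (K - i)) {w\<in>A. nones w = i}"
      by (rule sum.cong[OF refl]) (use assms in \<open>auto simp: Pw_len\<close>)
    then show "sum (Pw p) {w\<in>A. nones w = i} = real (card {w\<in>A. nones w = i}) * p ^ i * (1 - p) ^ (K - i)"
      by simp
  qed
  finally show ?thesis .
qed

lemma nones_Cons: "nones (b # w) = (if b then Suc (nones w) else nones w)"
  unfolding nones_def by simp

lemma card_W:
  "card {w. length w = n \<and> nones w = j} = n choose j"
proof (induction n arbitrary: j)
  case 0
  have "{w::bool list. length w = 0 \<and> nones w = j} = (if j = 0 then {[]} else {})"
    by (auto simp: nones_def)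
  then show ?case by simp
next
  case (Suc n)
  show ?case
  proof (cases j)
    case 0
    have "{w. length w = Suc n \<and> nones w = j} = Cons False ` {w. length w = n \<and> nones w = 0}"
      using 0 by (auto simp: nones_Cons length_Suc_conv split: if_splits)
    moreover have "card (Cons False ` {w. length w = n \<and> nones w = 0}) = card {w. length w = n \<and> nones w = 0}"
      by (rule card_image) auto
    ultimately show ?thesis using Suc.IH 0 by simp
  next
    case (Suc j')
    have "{w. length w = Suc n \<and> nones w = j} =
       Cons True ` {w. length w = n \<and> nones w = j'} \<union> Cons False ` {w. length w = n \<and> nones w = j}"
      using Suc by (auto simp: nones_Cons length_Suc_conv split: if_splits)
    moreover have "card (Cons True ` {w. length w = n \<and> nones w = j'} \<union> Cons False ` {w. length w = n \<and> nones w = j})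
       = card {w. length w = n \<and> nones w = j'} + card {w. length w = n \<and> nones w = j}"
      apply (subst card_Un_disjoint)
         apply (rule finite_imageI, rule finite_subset[OF _ finite_list_length[of n]], blast)
        apply (rule finite_imageI, rule finite_subset[OF _ finite_list_length[of n]], blast)
       apply blast
      apply (subst card_image, simp)+
      apply simp
      done
    ultimately show ?thesis using Suc.IH Suc by simp
  qed
qed

lemma binom_ge: "1 \<le> j \<Longrightarrow> j < n \<Longrightarrow> n \<le> n choose j"
proof (induction n arbitrary: j)
  case 0 then show ?case by simp
next
  case (Suc m)
  then obtain j' where j: "j = Suc j'" by (cases j) auto
  show ?case
  proof (cases "j' = 0")
    case True then show ?thesis using j by simp
  next
    case False
    then have "m \<le> m choose j'" using Suc j by simp
    moreover have "1 \<le> m choose Suc j'" proof -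
      have "Suc j' \<le> m" using Suc j by simp
      then have "0 < m choose Suc j'" by (rule zero_less_binomial)
      then show ?thesis by linarith
    qed
    ultimately show ?thesis using j by simp
  qed
qed


definition Tm :: "bool list set \<Rightarrow> bool list set \<Rightarrow> nat \<Rightarrow> bool list set" where
  "Tm A' A m = {concat us @ v | us v. set us \<subseteq> A' \<and> length us = m \<and> v \<in> A}"

lemma Tm_0: "Tm A' A 0 = A"
  unfolding Tm_def by auto

lemma Tm_Suc: "Tm A' A (Suc m) = (\<lambda>(u, w). u @ w) ` (A' \<times> Tm A' A m)"
proof
  show "Tm A' A (Suc m) \<subseteq> (\<lambda>(u, w). u @ w) ` (A' \<times> Tm A' A m)"
  proof
    fix x assume "x \<in> Tm A' A (Suc m)"
    then obtain us v where x: "x = concat us @ v" "set us \<subseteq> A'" "length us = Suc m" "v \<in> A"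
      unfolding Tm_def by blast
    then obtain u us' where us: "us = u # us'" by (cases us) auto
    have "concat us' @ v \<in> Tm A' A m" using x us unfolding Tm_def by auto
    moreover have "u \<in> A'" using x us by auto
    ultimately show "x \<in> (\<lambda>(u, w). u @ w) ` (A' \<times> Tm A' A m)"
      using x us by (auto intro!: image_eqI[where x="(u, concat us' @ v)"])
  qed
next
  show "(\<lambda>(u, w). u @ w) ` (A' \<times> Tm A' A m) \<subseteq> Tm A' A (Suc m)"
  proof
    fix x assume "x \<in> (\<lambda>(u, w). u @ w) ` (A' \<times> Tm A' A m)"
    then obtain u us v where x: "x = u @ (concat us @ v)" "u \<in> A'" "set us \<subseteq> A'" "length us = m" "v \<in> A"
      unfolding Tm_def by force
    then have "x = concat (u # us) @ v" by simp
    then show "x \<in> Tm A' A (Suc m)" unfolding Tm_def using x by fastforce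
  qed
qed

lemma Tm_len:
  assumes "A' \<subseteq> W K" "A \<subseteq> W K"
  shows "Tm A' A m \<subseteq> W (Suc m * K)"
proof (induction m)
  case 0 then show ?case using assms by (simp add: Tm_0)
next
  case (Suc m)
  then show ?case using assms by (auto simp: Tm_Suc subset_iff)
qed

lemma Tm_finite:
  assumes "A' \<subseteq> W K" "A \<subseteq> W K"
  shows "finite (Tm A' A m)"
  using Tm_len[OF assms] finite_list_length finite_subset by blast

lemma Tm_sum:
  assumes "A' \<subseteq> W K" "A \<subseteq> W K"
  shows "sum (Pw p) (Tm A' A m) = sum (Pw p) A' ^ m * sum (Pw p) A"
proof (induction m)
  case 0 then show ?case by (simp add: Tm_0)
next
  case (Suc m)
  have fA': "finite A'" using assms finite_list_length finite_subset by blast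
  have fT: "finite (Tm A' A m)" by (rule Tm_finite[OF assms])
  have inj: "inj_on (\<lambda>(u, w). u @ w) (A' \<times> Tm A' A m)"
  proof (rule inj_onI, clarsimp)
    fix u w u' w' assume "u \<in> A'" "u' \<in> A'" "u @ w = u' @ w'"
    then have "length u = length u'" using assms(1) by auto
    then show "u = u' \<and> w = w'" using \<open>u @ w = u' @ w'\<close> by (simp add: append_eq_append_conv)
  qed
  have "sum (Pw p) (Tm A' A (Suc m)) = sum (Pw p \<circ> (\<lambda>(u, w). u @ w)) (A' \<times> Tm A' A m)"
    unfolding Tm_Suc by (rule sum.reindex[OF inj])
  also have "\<dots> = sum (\<lambda>(u, w). Pw p u * Pw p w) (A' \<times> Tm A' A m)"
    by (rule sum.cong) (auto simp: Pw_append)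
  also have "\<dots> = (\<Sum>u\<in>A'. \<Sum>w\<in>Tm A' A m. Pw p u * Pw p w)"
    by (rule sum.cartesian_product[symmetric])
  also have "\<dots> = sum (Pw p) A' * sum (Pw p) (Tm A' A m)"
    by (simp add: sum_product)
  finally show ?case using Suc by simp
qed

lemma block_lang_Tm: "block_lang A' A = (\<Union>m. Tm A' A m)"
  unfolding block_lang_def Tm_def by blast

lemma block_has_sum:
  assumes "A' \<subseteq> W K" "A \<subseteq> W K" "1 \<le> K" "0 \<le> p" "p \<le> 1"
    and lt: "sum (Pw p) A' < 1"
  shows "(Pw p has_sum (sum (Pw p) A / (1 - sum (Pw p) A'))) (block_lang A' A)"
proof -
  define a where "a = sum (Pw p) A"
  define b where "b = sum (Pw p) A'"
  have a0: "0 \<le> a" unfolding a_def using assms by (intro sum_nonneg Pw_nonneg) auto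
  have b0: "0 \<le> b" unfolding b_def using assms by (intro sum_nonneg Pw_nonneg) auto
  have b1: "b < 1" using lt b_def by simp
  have nn: "\<And>x. 0 \<le> Pw p x" using assms Pw_nonneg by blast
  define U where "U n = (\<Union>m<n. Tm A' A m)" for n
  have fU: "finite (U n)" for n unfolding U_def using Tm_finite[OF assms(1,2)] by auto
  have sumU: "sum (Pw p) (U n) = a * (1 - b ^ n) / (1 - b)" for n
  proof -
    have "sum (Pw p) (U n) = (\<Sum>m<n. sum (Pw p) (Tm A' A m))"
      unfolding U_def
    proof (rule sum.UNION_disjoint)
      show "finite {..<n}" by simp
      show "\<forall>i\<in>{..<n}. finite (Tm A' A i)" using Tm_finite[OF assms(1,2)] by auto
      show "\<forall>i\<in>{..<n}. \<forall>j\<in>{..<n}. i \<noteq> j \<longrightarrow> Tm A' A i \<inter> Tm A' A j = {}"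
      proof (intro ballI impI)
        fix i j :: nat assume "i \<noteq> j"
        then have "Suc i * K \<noteq> Suc j * K" using assms(3) by simp
        show "Tm A' A i \<inter> Tm A' A j = {}"
        proof (rule ccontr)
          assume "Tm A' A i \<inter> Tm A' A j \<noteq> {}"
          then obtain x where "x \<in> Tm A' A i" "x \<in> Tm A' A j" by blast
          then have "length x = Suc i * K" "length x = Suc j * K"
            using Tm_len[OF assms(1,2), of i] Tm_len[OF assms(1,2), of j] by blast+
          then show False using \<open>Suc i * K \<noteq> Suc j * K\<close> by simp
        qed
      qed
    qed
    also have "\<dots> = (\<Sum>m<n. b ^ m * a)"
      using Tm_sum[OF assms(1,2)] a_def b_def by simp
    also have "\<dots> = a * (\<Sum>m<n. b ^ m)" by (simp add: sum_distrib_left mult.commute)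
    also have "\<dots> = a * (1 - b ^ n) / (1 - b)" using b1 by (simp add: sum_gp_strict)
    finally show ?thesis .
  qed
  have sumU_le: "sum (Pw p) (U n) \<le> a / (1 - b)" for n
  proof -
    have "a * (1 - b ^ n) \<le> a" using a0 b0 by (simp add: mult_left_le zero_le_power)
    then show ?thesis unfolding sumU using b1 by (simp add: divide_right_mono)
  qed
  have fin_le: "sum (Pw p) F \<le> a / (1 - b)" if "finite F" "F \<subseteq> block_lang A' A" for F
  proof -
    have "\<forall>x\<in>F. \<exists>m. x \<in> Tm A' A m" using that block_lang_Tm by auto
    then obtain g where g: "\<forall>x\<in>F. x \<in> Tm A' A (g x)" by metis
    define n where "n = Suc (Max (g ` F))"
    have "F \<subseteq> U n"
    proof
      fix x assume "x \<in> F"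
      then have "g x < n" unfolding n_def using that by (simp add: le_imp_less_Suc)
      then show "x \<in> U n" unfolding U_def using g \<open>x \<in> F\<close> by auto
    qed
    then have "sum (Pw p) F \<le> sum (Pw p) (U n)" using fU nn by (intro sum_mono2) auto
    then show ?thesis using sumU_le[of n] by simp
  qed
  have summ: "Pw p summable_on block_lang A' A"
  proof (rule nonneg_bdd_above_summable_on)
    show "bdd_above (sum (Pw p) ` {F. F \<subseteq> block_lang A' A \<and> finite F})"
      using fin_le by (intro bdd_aboveI[where M="a / (1 - b)"]) auto
  qed (use nn in auto)
  have le: "infsum (Pw p) (block_lang A' A) \<le> a / (1 - b)"
    by (rule infsum_le_finite_sums[OF summ fin_le])
  have ge: "a / (1 - b) \<le> infsum (Pw p) (block_lang A' A)"
  proof -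
    have UB: "U n \<subseteq> block_lang A' A" for n unfolding U_def block_lang_Tm by auto
    have "\<forall>n. a * (1 - b ^ n) / (1 - b) \<le> infsum (Pw p) (block_lang A' A)"
      using finite_sum_le_infsum[OF summ fU UB] nn sumU by metis
    moreover have "(\<lambda>n. a * (1 - b ^ n) / (1 - b)) \<longlonglongrightarrow> a * (1 - 0) / (1 - b)"
      using b0 b1 by (intro tendsto_intros LIMSEQ_power_zero) auto
    ultimately show ?thesis by (intro LIMSEQ_le_const2) auto
  qed
  show ?thesis unfolding has_sum_iff using summ le ge a_def b_def by simp
qed


lemma sum_W: "sum (Pw p) (W K) = 1"
proof -
  have "sum (Pw p) (W K) = (\<Sum>i\<le>K. real (card {w\<in>W K. nones w = i}) * p ^ i * (1 - p) ^ (K - i))"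
    by (rule sum_group_words) simp
  also have "\<dots> = (\<Sum>i\<le>K. real (K choose i) * p ^ i * (1 - p) ^ (K - i))"
    using card_W[of K] by simp
  also have "\<dots> = (p + (1 - p)) ^ K" by (rule binomial_ring[symmetric])
  finally show ?thesis by simp
qed

lemma prefix_same_len:
  assumes "length a = length b" "prefix (a @ X) (b @ Y)"
  shows "a = b \<and> prefix X Y"
proof -
  obtain z where "b @ Y = a @ X @ z" using assms(2) unfolding prefix_def by auto
  then show ?thesis using assms(1) by (auto simp: append_eq_append_conv)
qed

lemma block_prefix:
  assumes "A'' \<subseteq> W K" "A' \<inter> A'' = {}" "A' \<subseteq> W K"
  shows "set us \<subseteq> A' \<Longrightarrow> set us' \<subseteq> A' \<Longrightarrow> v \<in> A'' \<Longrightarrow> v' \<in> A'' \<Longrightarrow>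
    prefix (concat us @ v) (concat us' @ v') \<Longrightarrow> us = us' \<and> v = v'"
proof (induction us arbitrary: us')
  case Nil
  show ?case
  proof (cases us')
    case Nil
    then have "prefix (v @ []) (v' @ [])" using Nil.prems by simp
    moreover have "length v = length v'" using Nil.prems assms by auto
    ultimately have "v = v'" using prefix_same_len by blast
    then show ?thesis using \<open>us' = []\<close> by simp
  next
    case (Cons u' r)
    then have "prefix (v @ []) (u' @ (concat r @ v'))" using Nil.prems by simp
    moreover have "length v = length u'" using Nil.prems Cons assms by auto
    ultimately have "v = u'" using prefix_same_len by blast
    then show ?thesis using Nil.prems Cons assms by auto
  qed
next
  case (Cons u r)
  show ?case
  proof (cases us')
    case Nil
    then have "prefix (u @ (concat r @ v)) (v' @ [])" using Cons.prems by simp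
    moreover have "length u = length v'" using Cons.prems Nil assms by auto
    ultimately have "u = v'" using prefix_same_len by blast
    then show ?thesis using Cons.prems Nil assms by auto
  next
    case (Cons u' r')
    then have "prefix (u @ (concat r @ v)) (u' @ (concat r' @ v'))" using Cons.prems by simp
    moreover have "length u = length u'"
    proof -
      have "u \<in> A'" "u' \<in> A'" using Cons.prems Cons by auto
      then show ?thesis using assms(3) by auto
    qed
    ultimately have "u = u'" "prefix (concat r @ v) (concat r' @ v')" using prefix_same_len by blast+
    then show ?thesis using Cons.IH[of r'] Cons.prems Cons by auto
  qed
qed

lemma block_sim_struct:
  assumes "A0 \<subseteq> W K" "A1 \<subseteq> W K" "A0 \<inter> A1 = {}"
    and A': "A' = W K - (A0 \<union> A1)"
  shows "block_lang A' A0 \<inter> block_lang A' A1 = {}"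
    and "prefix_free (block_lang A' A0 \<union> block_lang A' A1)"
proof -
  have a1: "A0 \<union> A1 \<subseteq> W K" using assms by auto
  have a2: "A' \<inter> (A0 \<union> A1) = {}" "A' \<subseteq> W K" using A' by auto
  note bp = block_prefix[OF a1 a2]
  show "block_lang A' A0 \<inter> block_lang A' A1 = {}"
  proof (rule ccontr)
    assume "block_lang A' A0 \<inter> block_lang A' A1 \<noteq> {}"
    then obtain us v us' v' where "set us \<subseteq> A'" "v \<in> A0" "set us' \<subseteq> A'" "v' \<in> A1"
      "concat us @ v = concat us' @ v'"
      unfolding block_lang_def by blast
    then have "v = v'" using bp[of us us' v v'] by auto
    then show False using \<open>v \<in> A0\<close> \<open>v' \<in> A1\<close> assms(3) by auto
  qed
  show "prefix_free (block_lang A' A0 \<union> block_lang A' A1)"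
    unfolding prefix_free_def
  proof (intro ballI notI)
    fix x y assume "x \<in> block_lang A' A0 \<union> block_lang A' A1" "y \<in> block_lang A' A0 \<union> block_lang A' A1"
      "strict_prefix x y"
    then obtain us v us' v' where "set us \<subseteq> A'" "v \<in> A0 \<union> A1" "set us' \<subseteq> A'" "v' \<in> A0 \<union> A1"
      "x = concat us @ v" "y = concat us' @ v'"
      unfolding block_lang_def by blast
    then have "x = y" using bp[of us us' v v'] \<open>strict_prefix x y\<close> by (auto simp: strict_prefix_def)
    then show False using \<open>strict_prefix x y\<close> by simp
  qed
qed


lemma sim_value:
  assumes "A0 \<subseteq> W K" "A1 \<subseteq> W K" "A0 \<inter> A1 = {}" "1 \<le> K" "0 < p" "p < 1"
    and A': "A' = W K - (A0 \<union> A1)"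
    and s: "0 < sum (Pw p) (A0 \<union> A1)"
  shows "PL p (block_lang A' A1) = sum (Pw p) A1 / sum (Pw p) (A0 \<union> A1)"
    and "PL p (block_lang A' A0 \<union> block_lang A' A1) = 1"
proof -
  have fW: "finite (W K)" by (rule finite_list_length)
  have "W K = A' \<union> (A0 \<union> A1)" "A' \<inter> (A0 \<union> A1) = {}" using A' assms(1,2) by auto
  then have "sum (Pw p) (W K) = sum (Pw p) A' + sum (Pw p) (A0 \<union> A1)"
    using fW by (metis finite_Un sum.union_disjoint)
  then have sA': "sum (Pw p) A' = 1 - sum (Pw p) (A0 \<union> A1)" using sum_W[of p K] by simp
  have A'W: "A' \<subseteq> W K" using A' by auto
  have lt: "sum (Pw p) A' < 1" using sA' s by simp
  have "(Pw p has_sum (sum (Pw p) A1 / (1 - sum (Pw p) A'))) (block_lang A' A1)"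
    by (rule block_has_sum[OF A'W assms(2,4)]) (use assms lt in auto)
  then show "PL p (block_lang A' A1) = sum (Pw p) A1 / sum (Pw p) (A0 \<union> A1)"
    unfolding PL_def using sA' by (simp add: infsumI)
  have eq: "block_lang A' A0 \<union> block_lang A' A1 = block_lang A' (A0 \<union> A1)"
    unfolding block_lang_def by blast
  have "(Pw p has_sum (sum (Pw p) (A0 \<union> A1) / (1 - sum (Pw p) A'))) (block_lang A' (A0 \<union> A1))"
    by (rule block_has_sum[OF A'W _ assms(4)]) (use assms lt in auto)
  then show "PL p (block_lang A' A0 \<union> block_lang A' A1) = 1"
    unfolding PL_def eq using sA' s by (simp add: infsumI)
qed

lemma shift_sum:
  fixes c :: "nat \<Rightarrow> real"
  shows "(\<Sum>j\<le>k+2*M. (if M \<le> j \<and> j - M \<le> k then c (j-M) else 0) * p^j * (1-p)^(k+2*M-j))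
        = p^M * (1-p)^M * (\<Sum>i\<le>k. c i * p^i * (1-p)^(k-i))"
proof -
  let ?g = "\<lambda>j. (if M \<le> j \<and> j - M \<le> k then c (j-M) else 0) * p^j * (1-p)^(k+2*M-j)"
  have sub: "(\<lambda>i. i + M) ` {..k} \<subseteq> {..k+2*M}" by auto
  have "(\<Sum>j\<le>k+2*M. ?g j) = (\<Sum>j\<in>(\<lambda>i. i + M) ` {..k}. ?g j)"
  proof (rule sum.mono_neutral_right[OF finite_atMost sub], intro ballI)
    fix j assume j: "j \<in> {..k+2*M} - (\<lambda>i. i + M) ` {..k}"
    have "\<not> (M \<le> j \<and> j - M \<le> k)"
    proof
      assume "M \<le> j \<and> j - M \<le> k"
      then have "j \<in> (\<lambda>i. i + M) ` {..k}" by (intro image_eqI[where x="j - M"]) auto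
      then show False using j by blast
    qed
    then show "?g j = 0" by auto
  qed
  also have "\<dots> = (\<Sum>i\<le>k. ?g (i + M))"
    by (subst sum.reindex) (auto simp: inj_on_def)
  also have "\<dots> = (\<Sum>i\<le>k. p^M * (1-p)^M * (c i * p^i * (1-p)^(k-i)))"
  proof (rule sum.cong[OF refl])
    fix i assume "i \<in> {..k}"
    then have "k + 2*M - (i + M) = M + (k - i)" by auto
    then have e: "(1-p)^(k + 2*M - (i + M)) = (1-p)^M * (1-p)^(k - i)"
      by (simp only: power_add)
    have "?g (i + M) = c i * p^(i+M) * (1-p)^(k + 2*M - (i + M))" using \<open>i \<in> {..k}\<close> by simp
    also have "\<dots> = c i * (p^i * p^M) * ((1-p)^M * (1-p)^(k - i))" by (simp only: e power_add)
    finally show "?g (i + M) = p^M * (1-p)^M * (c i * p^i * (1-p)^(k-i))"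
      by (simp add: algebra_simps)
  qed
  also have "\<dots> = p^M * (1-p)^M * (\<Sum>i\<le>k. c i * p^i * (1-p)^(k-i))"
    by (simp add: sum_distrib_left)
  finally show ?thesis .
qed


theorem proposition2p5:
  fixes f :: "real \<Rightarrow> real" and D :: "real set"
  assumes "D \<subseteq> {0<..<1}" and "\<forall>p\<in>D. f p \<in> {0<..<1}"
  shows "has_block_simulation f D \<longleftrightarrow>
    (\<exists>k::nat. \<exists>d e :: nat \<Rightarrow> int.
       (\<forall>i\<le>k. 0 \<le> d i \<and> d i \<le> e i) \<and>
       (\<forall>p\<in>D. (\<Sum>i\<le>k. of_int (e i) * p ^ i * (1 - p) ^ (k - i)) \<noteq> 0 \<and>
               f p = (\<Sum>i\<le>k. of_int (d i) * p ^ i * (1 - p) ^ (k - i)) /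
                     (\<Sum>i\<le>k. of_int (e i) * p ^ i * (1 - p) ^ (k - i))))"
proof
  assume "has_block_simulation f D"
  then obtain K A0 A1 where K: "1 \<le> K" and A0: "A0 \<subseteq> W K" and A1: "A1 \<subseteq> W K"
    and dis: "A0 \<inter> A1 = {}"
    and sim: "is_simulation f D (block_lang (W K - (A0 \<union> A1)) A0) (block_lang (W K - (A0 \<union> A1)) A1)"
    unfolding has_block_simulation_def Let_def by blast
  define A' where "A' = W K - (A0 \<union> A1)"
  define d where "d i = int (card {w\<in>A1. nones w = i})" for i
  define e where "e i = int (card {w\<in>A0 \<union> A1. nones w = i})" for i
  have fU: "finite (A0 \<union> A1)" using A0 A1 finite_list_length finite_subset by (metis le_sup_iff)
  show "\<exists>k::nat. \<exists>d e :: nat \<Rightarrow> int.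
       (\<forall>i\<le>k. 0 \<le> d i \<and> d i \<le> e i) \<and>
       (\<forall>p\<in>D. (\<Sum>i\<le>k. of_int (e i) * p ^ i * (1 - p) ^ (k - i)) \<noteq> 0 \<and>
               f p = (\<Sum>i\<le>k. of_int (d i) * p ^ i * (1 - p) ^ (k - i)) /
                     (\<Sum>i\<le>k. of_int (e i) * p ^ i * (1 - p) ^ (k - i)))"
  proof (intro exI conjI allI impI ballI)
    fix i :: nat
    show "0 \<le> d i" unfolding d_def by simp
    have "card {w\<in>A1. nones w = i} \<le> card {w\<in>A0 \<union> A1. nones w = i}"
      by (rule card_mono) (use fU in auto)
    then show "d i \<le> e i" unfolding d_def e_def by simp
  next
    fix p assume pD: "p \<in> D"
    then have p: "0 < p" "p < 1" using assms(1) by auto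
    have fp: "0 < f p" using assms(2) pD by auto
    have PL1: "PL p (block_lang A' A1) = f p" using sim pD unfolding is_simulation_def A'_def by blast
    have "A1 \<noteq> {}"
    proof
      assume "A1 = {}"
      then have "block_lang A' A1 = {}" unfolding block_lang_def by auto
      then show False using PL1 fp unfolding PL_def by simp
    qed
    have fA1: "finite A1" using fU by auto
    have a1: "0 < sum (Pw p) A1" using \<open>A1 \<noteq> {}\<close> fA1 Pw_pos[OF p] by (intro sum_pos) auto
    have "sum (Pw p) A1 \<le> sum (Pw p) (A0 \<union> A1)"
      using fU Pw_nonneg[of p] p by (intro sum_mono2) auto
    then have s: "0 < sum (Pw p) (A0 \<union> A1)" using a1 by simp
    have val: "PL p (block_lang A' A1) = sum (Pw p) A1 / sum (Pw p) (A0 \<union> A1)"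
      by (rule sim_value(1)[OF A0 A1 dis K p A'_def s])
    have Es: "(\<Sum>i\<le>K. of_int (e i) * p ^ i * (1 - p) ^ (K - i)) = sum (Pw p) (A0 \<union> A1)"
      using sum_group_words[of "A0 \<union> A1" K p] A0 A1 unfolding e_def by simp
    have Ds: "(\<Sum>i\<le>K. of_int (d i) * p ^ i * (1 - p) ^ (K - i)) = sum (Pw p) A1"
      using sum_group_words[of "A1" K p] A1 unfolding d_def by simp
    show "(\<Sum>i\<le>K. of_int (e i) * p ^ i * (1 - p) ^ (K - i)) \<noteq> 0" using Es s by simp
    show "f p = (\<Sum>i\<le>K. of_int (d i) * p ^ i * (1 - p) ^ (K - i)) /
                     (\<Sum>i\<le>K. of_int (e i) * p ^ i * (1 - p) ^ (K - i))"
      using Es Ds val PL1 by simp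
  qed
next
  assume "\<exists>k::nat. \<exists>d e :: nat \<Rightarrow> int.
       (\<forall>i\<le>k. 0 \<le> d i \<and> d i \<le> e i) \<and>
       (\<forall>p\<in>D. (\<Sum>i\<le>k. of_int (e i) * p ^ i * (1 - p) ^ (k - i)) \<noteq> 0 \<and>
               f p = (\<Sum>i\<le>k. of_int (d i) * p ^ i * (1 - p) ^ (k - i)) /
                     (\<Sum>i\<le>k. of_int (e i) * p ^ i * (1 - p) ^ (k - i)))"
  then obtain k and d e :: "nat \<Rightarrow> int" where de: "\<forall>i\<le>k. 0 \<le> d i \<and> d i \<le> e i"
    and fD: "\<forall>p\<in>D. (\<Sum>i\<le>k. of_int (e i) * p ^ i * (1 - p) ^ (k - i)) \<noteq> 0 \<and>
               f p = (\<Sum>i\<le>k. of_int (d i) * p ^ i * (1 - p) ^ (k - i)) /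
                     (\<Sum>i\<le>k. of_int (e i) * p ^ i * (1 - p) ^ (k - i))"
    by blast
  define B where "B = (\<Sum>i\<le>k. nat (e i))"
  define M where "M = Suc B"
  define K where "K = k + 2 * M"
  define e' where "e' j = (if M \<le> j \<and> j - M \<le> k then nat (e (j - M)) else 0)" for j
  define d' where "d' j = (if M \<le> j \<and> j - M \<le> k then nat (d (j - M)) else 0)" for j
  have K1: "1 \<le> K" unfolding K_def M_def by simp
  have bnd: "d' j \<le> e' j \<and> e' j \<le> card {w. length w = K \<and> nones w = j}" if "j \<le> K" for j
  proof (cases "M \<le> j \<and> j - M \<le> k")
    case True
    then have "0 \<le> d (j - M)" "d (j - M) \<le> e (j - M)" using de by auto
    then have 1: "d' j \<le> e' j" unfolding d'_def e'_def using True by simp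
    have "nat (e (j - M)) \<le> B" unfolding B_def using True by (intro member_le_sum) auto
    also have "B < K" unfolding K_def M_def by simp
    also have "K \<le> K choose j" using True unfolding K_def M_def by (intro binom_ge) auto
    finally have "e' j \<le> card {w. length w = K \<and> nones w = j}"
      unfolding e'_def card_W using True by simp
    then show ?thesis using 1 by simp
  next
    case False then show ?thesis unfolding d'_def e'_def by auto
  qed
  have "\<forall>j. \<exists>ST. j \<le> K \<longrightarrow> (fst ST \<subseteq> {w. length w = K \<and> nones w = j} \<and> card (fst ST) = e' j
      \<and> snd ST \<subseteq> fst ST \<and> card (snd ST) = d' j)"
  proof (intro allI)
    fix j
    show "\<exists>ST. j \<le> K \<longrightarrow> (fst ST \<subseteq> {w. length w = K \<and> nones w = j} \<and> card (fst ST) = e' j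
      \<and> snd ST \<subseteq> fst ST \<and> card (snd ST) = d' j)"
    proof (cases "j \<le> K")
      case True
      obtain S where S: "S \<subseteq> {w. length w = K \<and> nones w = j}" "card S = e' j"
        using obtain_subset_with_card_n[of "e' j" "{w. length w = K \<and> nones w = j}"] bnd[OF True] by blast
      have "d' j \<le> card S" using S bnd[OF True] by simp
      then obtain T where T: "T \<subseteq> S" "card T = d' j"
        using obtain_subset_with_card_n by blast
      show ?thesis using S T by (intro exI[where x="(S, T)"]) simp
    qed simp
  qed
  from choice[OF this] obtain ST where ST: "\<forall>j. j \<le> K \<longrightarrow> (fst (ST j) \<subseteq> {w. length w = K \<and> nones w = j} \<and> card (fst (ST j)) = e' j
      \<and> snd (ST j) \<subseteq> fst (ST j) \<and> card (snd (ST j)) = d' j)"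
    by blast
  define S where "S j = fst (ST j)" for j
  define T where "T j = snd (ST j)" for j
  have S: "\<And>j. j \<le> K \<Longrightarrow> S j \<subseteq> {w. length w = K \<and> nones w = j}"
   and cS: "\<And>j. j \<le> K \<Longrightarrow> card (S j) = e' j"
   and T: "\<And>j. j \<le> K \<Longrightarrow> T j \<subseteq> S j"
   and cT: "\<And>j. j \<le> K \<Longrightarrow> card (T j) = d' j"
    using ST unfolding S_def T_def by auto
  define A1 where "A1 = (\<Union>j\<le>K. T j)"
  define A0 where "A0 = (\<Union>j\<le>K. S j - T j)"
  define A' where "A' = W K - (A0 \<union> A1)"
  have A1W: "A1 \<subseteq> W K" unfolding A1_def using S T by blast
  have A0W: "A0 \<subseteq> W K" unfolding A0_def using S by blast
  have dis: "A0 \<inter> A1 = {}"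
  proof (rule ccontr)
    assume "A0 \<inter> A1 \<noteq> {}"
    then obtain x j j' where x: "j \<le> K" "x \<in> S j" "x \<notin> T j" "j' \<le> K" "x \<in> T j'"
      unfolding A0_def A1_def by blast
    then have "nones x = j" "nones x = j'" using S T by blast+
    then show False using x by simp
  qed
  have U: "A0 \<union> A1 = (\<Union>j\<le>K. S j)" unfolding A0_def A1_def using T by blast
  have c1: "card {w\<in>A1. nones w = i} = d' i" if "i \<le> K" for i
  proof -
    have "{w\<in>A1. nones w = i} = T i" unfolding A1_def using S T that by blast
    then show ?thesis using cT that by simp
  qed
  have c2: "card {w\<in>A0 \<union> A1. nones w = i} = e' i" if "i \<le> K" for i
  proof -
    have "{w\<in>A0 \<union> A1. nones w = i} = S i" unfolding U using S that by blast
    then show ?thesis using cS that by simp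
  qed
  have conv: "(\<Sum>j\<le>K. real (c' j) * p ^ j * (1 - p) ^ (K - j)) =
      p^M * (1-p)^M * (\<Sum>i\<le>k. of_int (c i) * p^i * (1-p)^(k-i))"
    if "\<And>j. c' j = (if M \<le> j \<and> j - M \<le> k then nat (c (j - M)) else 0)" "\<forall>i\<le>k. 0 \<le> c i"
    for c' and c :: "nat \<Rightarrow> int" and p :: real
  proof -
    have "(\<Sum>j\<le>K. real (c' j) * p ^ j * (1 - p) ^ (K - j)) =
      (\<Sum>j\<le>k+2*M. (if M \<le> j \<and> j - M \<le> k then of_int (c (j-M)) else 0) * p^j * (1-p)^(k+2*M-j))"
      unfolding K_def by (rule sum.cong[OF refl]) (use that in auto)
    then show ?thesis using shift_sum[of M k "\<lambda>i. of_int (c i)" p] by simp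
  qed
  show "has_block_simulation f D"
    unfolding has_block_simulation_def Let_def
  proof (intro exI conjI)
    show "1 \<le> K" "A0 \<subseteq> {w. length w = K}" "A1 \<subseteq> {w. length w = K}" "A0 \<inter> A1 = {}"
      using K1 A0W A1W dis by auto
    show "is_simulation f D (block_lang (W K - (A0 \<union> A1)) A0) (block_lang (W K - (A0 \<union> A1)) A1)"
      unfolding is_simulation_def
    proof (intro conjI ballI)
      show "block_lang (W K - (A0 \<union> A1)) A0 \<inter> block_lang (W K - (A0 \<union> A1)) A1 = {}"
        by (rule block_sim_struct(1)[OF A0W A1W dis refl])
      show "prefix_free (block_lang (W K - (A0 \<union> A1)) A0 \<union> block_lang (W K - (A0 \<union> A1)) A1)"
        by (rule block_sim_struct(2)[OF A0W A1W dis refl])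
      fix p assume pD: "p \<in> D"
      then have p: "0 < p" "p < 1" using assms(1) by auto
      define Dp where "Dp = (\<Sum>i\<le>k. of_int (d i) * p ^ i * (1 - p) ^ (k - i))"
      define Ep where "Ep = (\<Sum>i\<le>k. of_int (e i) * p ^ i * (1 - p) ^ (k - i))"
      have Ep0: "Ep \<noteq> 0" and fpv: "f p = Dp / Ep" using fD pD unfolding Dp_def Ep_def by auto
      have "0 \<le> Ep" unfolding Ep_def using de p
        by (intro sum_nonneg mult_nonneg_nonneg) (auto intro: order_trans)
      then have Ep: "0 < Ep" using Ep0 by simp
      have "sum (Pw p) (A0 \<union> A1) = (\<Sum>j\<le>K. real (e' j) * p ^ j * (1 - p) ^ (K - j))"
        using sum_group_words[of "A0 \<union> A1" K p] A0W A1W c2 by simp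
      also have "\<dots> = p^M * (1-p)^M * Ep" unfolding Ep_def
        by (rule conv) (use e'_def de in \<open>auto intro: order_trans\<close>)
      finally have sE: "sum (Pw p) (A0 \<union> A1) = p^M * (1-p)^M * Ep" .
      have "sum (Pw p) A1 = (\<Sum>j\<le>K. real (d' j) * p ^ j * (1 - p) ^ (K - j))"
        using sum_group_words[of "A1" K p] A1W c1 by simp
      also have "\<dots> = p^M * (1-p)^M * Dp" unfolding Dp_def
        by (rule conv) (use d'_def de in auto)
      finally have sD: "sum (Pw p) A1 = p^M * (1-p)^M * Dp" .
      have q: "0 < p^M * (1-p)^M" using p by simp
      have s: "0 < sum (Pw p) (A0 \<union> A1)" unfolding sE using q Ep by simp
      show "PL p (block_lang (W K - (A0 \<union> A1)) A0 \<union> block_lang (W K - (A0 \<union> A1)) A1) = 1"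
        by (rule sim_value(2)[OF A0W A1W dis K1 p refl s])
      have "PL p (block_lang (W K - (A0 \<union> A1)) A1) = sum (Pw p) A1 / sum (Pw p) (A0 \<union> A1)"
        by (rule sim_value(1)[OF A0W A1W dis K1 p refl s])
      also have "\<dots> = Dp / Ep" unfolding sD sE using p by simp
      finally show "PL p (block_lang (W K - (A0 \<union> A1)) A1) = f p" using fpv by simp
    qed
  qed
qed

end
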